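(* $D(18,\{3,4\})\le 33$; equivalently, there exists a $\{K_3,K_4\}$-decomposition of $K_{18}$ with $\alpha\le 15$ (indeed one with $15$ copies of $K_3$ and $18$ copies of $K_4$).
   Context: A $\{K_3,K_4\}$-decomposition of $K_v$ is a collection of subgraphs, each isomorphic to $K_3$ or $K_4$, such that every edge of $K_v$ lies in exactly one of them. In such a decomposition $\alpha$ and $\beta$ denote the numbers of copies of $K_3$ and $K_4$; since $3\alpha+6\beta=\binom{v}{2}$, minimizing $\alpha+\beta$ is equivalent to minimizing $\alpha$. $D(v,\{3,4\})$ is the minimum of $\alpha+\beta$ over all such decompositions of $K_v$. *)

theory Defs
  imports Main
begin

text \<open>K_v has vertex set {0..<v}. A copy of K_3 or K_4 in K_v is determined by its
vertex set (a 3- or 4-subset).\<close>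

definition K34_decomposition :: "nat \<Rightarrow> nat set set \<Rightarrow> bool" where
  "K34_decomposition v B \<longleftrightarrow>
     finite B \<and>
     (\<forall>b\<in>B. b \<subseteq> {0..<v} \<and> (card b = 3 \<or> card b = 4)) \<and>
     (\<forall>x y. x < v \<longrightarrow> y < v \<longrightarrow> x \<noteq> y \<longrightarrow> (\<exists>!b. b \<in> B \<and> x \<in> b \<and> y \<in> b))"

definition num_K3 :: "nat set set \<Rightarrow> nat" where
  "num_K3 B = card {b \<in> B. card b = 3}"

definition num_K4 :: "nat set set \<Rightarrow> nat" where
  "num_K4 B = card {b \<in> B. card b = 4}"

definition D34 :: "nat \<Rightarrow> nat" where
  "D34 v = (LEAST n. \<exists>B. K34_decomposition v B \<and> num_K3 B + num_K4 B = n)"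

end

theory Submission
  imports Defs
begin

definition M :: "nat set list" where
  "M = [{1,2,5,15}, {0,1,4,17}, {0,2,3,16}, {0,5,9}, {2,4,11}, {1,3,10}, {3,5,11,12}, {4,5,10,14}, {3,4,9,13}, {5,8,16,17}, {3,6,15,17}, {4,7,15,16}, {4,6,8,12}, {5,6,7,13}, {3,7,8,14}, {1,7,9}, {2,8,10}, {0,6,11}, {2,6,9}, {1,8,11}, {0,7,10}, {6,10,16}, {7,11,17}, {8,9,15}, {2,7,12}, {0,8,13}, {1,6,14}, {1,12,13,16}, {2,13,14,17}, {0,12,14,15}, {9,11,14,16}, {10,11,13,15}, {9,10,12,17}]"

lemma M_distinct: "distinct M"
  unfolding M_def by code_simp

lemma M_blocks: "list_all (\<lambda>b. b \<subseteq> {0..<18} \<and> (card b = 3 \<or> card b = 4)) M"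
  unfolding M_def by code_simp

lemma M_pairs: "list_all (\<lambda>x. list_all (\<lambda>y. x \<noteq> y \<longrightarrow> length (filter (\<lambda>b. x \<in> b \<and> y \<in> b) M) = 1) [0..<18]) [0..<18]"
  unfolding M_def by code_simp

lemma M_K3: "length (filter (\<lambda>b. card b = 3) M) = 15"
  unfolding M_def by code_simp

lemma M_K4: "length (filter (\<lambda>b. card b = 4) M) = 18"
  unfolding M_def by code_simp

lemma ex1_from_filter:
  assumes "distinct xs" "length (filter P xs) = 1"
  shows "\<exists>!b. b \<in> set xs \<and> P b"
proof -
  have "card ({x. P x} \<inter> set xs) = 1"
    using assms distinct_length_filter by metis
  then obtain a where "{x. P x} \<inter> set xs = {a}" by (auto simp: card_Suc_eq)
  then have "\<forall>z. (z \<in> set xs \<and> P z) = (z = a)" by (auto simp: set_eq_iff)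
  then show ?thesis by auto
qed

lemma M_decomp: "K34_decomposition 18 (set M)"
proof -
  have "\<forall>b\<in>set M. b \<subseteq> {0..<18} \<and> (card b = 3 \<or> card b = 4)"
    using M_blocks by (simp add: list_all_iff)
  moreover have "\<exists>!b. b \<in> set M \<and> x \<in> b \<and> y \<in> b"
    if "x < 18" "y < 18" "x \<noteq> y" for x y :: nat
  proof -
    have "length (filter (\<lambda>b. x \<in> b \<and> y \<in> b) M) = 1"
      using M_pairs that by (simp add: list_all_iff)
    then show ?thesis using ex1_from_filter[OF M_distinct] by blast
  qed
  ultimately show ?thesis unfolding K34_decomposition_def by blast
qed

lemma M_num3: "num_K3 (set M) = 15"
proof -
  have "num_K3 (set M) = card ({b. card b = 3} \<inter> set M)"
    unfolding num_K3_def by (rule arg_cong[where f=card]) blast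
  also have "\<dots> = 15" using M_K3 distinct_length_filter[OF M_distinct] by metis
  finally show ?thesis .
qed

lemma M_num4: "num_K4 (set M) = 18"
proof -
  have "num_K4 (set M) = card ({b. card b = 4} \<inter> set M)"
    unfolding num_K4_def by (rule arg_cong[where f=card]) blast
  also have "\<dots> = 18" using M_K4 distinct_length_filter[OF M_distinct] by metis
  finally show ?thesis .
qed

theorem mainTheorem3:
  shows "D34 18 \<le> 33 \<and>
    (\<exists>B. K34_decomposition 18 B \<and> num_K3 B = 15 \<and> num_K4 B = 18)"
proof -
  have w: "K34_decomposition 18 (set M) \<and> num_K3 (set M) = 15 \<and> num_K4 (set M) = 18"
    using M_decomp M_num3 M_num4 by blast
  have "D34 18 \<le> 33"
    unfolding D34_def
    by (rule Least_le) (use w in auto)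
  with w show ?thesis by blast
qed

end
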